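(* (i) Let two reciprocal $(6,10)$ figures with vertices $\Psi,\Psi_{12},\Phi_1,\Phi_2,\Phi_{13},\Phi_{23}$ and $\Psi_1,\Psi_2,\Phi,\Phi_3,\Phi_{12},\Phi_{123}$ be given, and define the real dilations $a,b,c,d,e,a_3,b_2,c_1,d_2,e_1$ by $$\Phi_{12}-\Phi=a(\Phi_1-\Phi_2),\ \Phi_{13}-\Psi=b(\Psi_1-\Phi_3),\ \Phi_{23}-\Psi=c(\Psi_2-\Phi_3),\ \Psi_1-\Phi=d(\Phi_1-\Psi),\ \Psi_2-\Phi=e(\Phi_2-\Psi),$$ $$\Phi_{123}-\Phi_3=a_3(\Phi_{13}-\Phi_{23}),\ \Phi_{123}-\Psi_2=b_2(\Psi_{12}-\Phi_{23}),\ \Phi_{123}-\Psi_1=c_1(\Psi_{12}-\Phi_{13}),$$ $$\Psi_{12}-\Phi_2=d_2(\Phi_{12}-\Psi_2),\ \Psi_{12}-\Phi_1=e_1(\Phi_{12}-\Psi_1).$$ Then $$a_3=\frac{a}{bc(ad+ed-ea)+a(b-c)},\quad b_2=\frac{a_3(c-b)+1}{c},\quad c_1=\frac{a_3(c-b)+1}{b},\quad d_2=\frac{d}{ad+ed-ea},\quad e_1=\frac{e}{ad+ed-ea}.$$ (ii) Conversely, let $\Phi,\Phi_1,\Phi_2,\Phi_3,\Psi$ be five generic points of $\mathbb{C}$, let $a,b,c,d,e\in\mathbb{R}$ be arbitrary non-vanishing real numbers and let $a_3,b_2,c_1,d_2,e_1$ be given by the formulas above. Then the ten linear equations above are compatible,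 and the points $\Psi,\Psi_{12},\Phi_1,\Phi_2,\Phi_{13},\Phi_{23}$ and $\Psi_1,\Psi_2,\Phi,\Phi_3,\Phi_{12},\Phi_{123}$ are the vertices of two reciprocal $(6,10)$ figures. These satisfy $$Q(\Phi_1,\Phi_2,\Psi,\Psi_{12})=Q(\Psi_2,\Psi_1,\Phi_{12},\Phi),\qquad Q(\Psi_1,\Psi_2,\Phi_3,\Phi_{123})=Q(\Phi_{23},\Phi_{13},\Psi_{12},\Psi).$$
   Context: The plane is identified with $\mathbb{C}$; $Q(P_1,P_2,P_3,P_4)=\frac{(P_1-P_2)(P_3-P_4)}{(P_2-P_3)(P_4-P_1)}$. A $(6,10)$ figure (first kind) has vertices $\Psi,\Psi_{12},\Phi_1,\Phi_2,\Phi_{13},\Phi_{23}$ and the ten straight edges $\Phi_1\Phi_2$, $\Psi\Phi_1$, $\Psi\Phi_2$, $\Psi\Phi_{13}$, $\Psi\Phi_{23}$, $\Phi_{13}\Phi_{23}$, $\Psi_{12}\Phi_{13}$, $\Psi_{12}\Phi_{23}$, $\Psi_{12}\Phi_1$, $\Psi_{12}\Phi_2$ (an octahedral figure with the edges $\Phi_1\Phi_{13}$ and $\Phi_2\Phi_{23}$ removed). Its reciprocal has vertices $\Psi_1,\Psi_2,\Phi,\Phi_3,\Phi_{12},\Phi_{123}$ and ten edges; the two figures are reciprocal when the corresponding edges are parallel, the correspondence being: $\Phi\Phi_{12}\parallel\Phi_1\Phi_2$, $\Psi_1\Phi_3\parallel\Psi\Phi_{13}$, $\Psi_2\Phi_3\parallel\Psi\Phi_{23}$,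 $\Phi\Psi_1\parallel\Psi\Phi_1$, $\Phi\Psi_2\parallel\Psi\Phi_2$, $\Phi_3\Phi_{123}\parallel\Phi_{13}\Phi_{23}$, $\Psi_2\Phi_{123}\parallel\Psi_{12}\Phi_{23}$, $\Psi_1\Phi_{123}\parallel\Psi_{12}\Phi_{13}$, $\Phi_{12}\Psi_2\parallel\Psi_{12}\Phi_2$, $\Phi_{12}\Psi_1\parallel\Psi_{12}\Phi_1$ (lines meeting at a vertex in one figure then form closed polygons in the other, in Maxwell's sense). Parallelism is expressed by the real dilations in the displayed equations. *)

theory Defs
  imports Complex_Main
begin

definition Q :: "complex \<Rightarrow> complex \<Rightarrow> complex \<Rightarrow> complex \<Rightarrow> complex" where
  "Q P1 P2 P3 P4 = ((P1 - P2) * (P3 - P4)) / ((P2 - P3) * (P4 - P1))"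

definition parallel :: "complex \<Rightarrow> complex \<Rightarrow> bool" where
  "parallel z w \<longleftrightarrow> (\<exists>s t :: real. (s \<noteq> 0 \<or> t \<noteq> 0) \<and> of_real s * z + of_real t * w = 0)"

definition vertex_nondeg :: "complex \<Rightarrow> complex list \<Rightarrow> bool" where
  "vertex_nondeg p qs \<longleftrightarrow>
     (\<forall>i < length qs. \<forall>j < length qs. i \<noteq> j \<longrightarrow> \<not> parallel (qs ! i - p) (qs ! j - p))"

definition fig1_nondeg :: "complex \<Rightarrow> complex \<Rightarrow> complex \<Rightarrow> complex \<Rightarrow> complex \<Rightarrow> complex \<Rightarrow> bool" where
  "fig1_nondeg Psi Psi12 Phi1 Phi2 Phi13 Phi23 \<longleftrightarrow>
     vertex_nondeg Psi [Phi1, Phi2, Phi13, Phi23] \<and>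
     vertex_nondeg Psi12 [Phi13, Phi23, Phi1, Phi2] \<and>
     vertex_nondeg Phi1 [Phi2, Psi, Psi12] \<and>
     vertex_nondeg Phi2 [Phi1, Psi, Psi12] \<and>
     vertex_nondeg Phi13 [Psi, Phi23, Psi12] \<and>
     vertex_nondeg Phi23 [Psi, Phi13, Psi12]"

definition fig2_nondeg :: "complex \<Rightarrow> complex \<Rightarrow> complex \<Rightarrow> complex \<Rightarrow> complex \<Rightarrow> complex \<Rightarrow> bool" where
  "fig2_nondeg Psi1 Psi2 Phi Phi3 Phi12 Phi123 \<longleftrightarrow>
     vertex_nondeg Phi [Phi12, Psi1, Psi2] \<and>
     vertex_nondeg Psi1 [Phi3, Phi, Phi123, Phi12] \<and>
     vertex_nondeg Psi2 [Phi3, Phi, Phi123, Phi12] \<and>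
     vertex_nondeg Phi3 [Psi1, Psi2, Phi123] \<and>
     vertex_nondeg Phi12 [Phi, Psi2, Psi1] \<and>
     vertex_nondeg Phi123 [Phi3, Psi2, Psi1]"

definition recip_eqs ::
  "complex \<Rightarrow> complex \<Rightarrow> complex \<Rightarrow> complex \<Rightarrow> complex \<Rightarrow> complex \<Rightarrow>
   complex \<Rightarrow> complex \<Rightarrow> complex \<Rightarrow> complex \<Rightarrow> complex \<Rightarrow> complex \<Rightarrow>
   real \<Rightarrow> real \<Rightarrow> real \<Rightarrow> real \<Rightarrow> real \<Rightarrow> real \<Rightarrow> real \<Rightarrow> real \<Rightarrow> real \<Rightarrow> real \<Rightarrow> bool" where
  "recip_eqs Psi Psi12 Phi1 Phi2 Phi13 Phi23 Psi1 Psi2 Phi Phi3 Phi12 Phi123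
             a b c d e a3 b2 c1 d2 e1 \<longleftrightarrow>
     Phi12 - Phi = of_real a * (Phi1 - Phi2) \<and>
     Phi13 - Psi = of_real b * (Psi1 - Phi3) \<and>
     Phi23 - Psi = of_real c * (Psi2 - Phi3) \<and>
     Psi1 - Phi = of_real d * (Phi1 - Psi) \<and>
     Psi2 - Phi = of_real e * (Phi2 - Psi) \<and>
     Phi123 - Phi3 = of_real a3 * (Phi13 - Phi23) \<and>
     Phi123 - Psi2 = of_real b2 * (Psi12 - Phi23) \<and>
     Phi123 - Psi1 = of_real c1 * (Psi12 - Phi13) \<and>
     Psi12 - Phi2 = of_real d2 * (Phi12 - Psi2) \<and>
     Psi12 - Phi1 = of_real e1 * (Phi12 - Psi1)"

end

theory Submission
  imports Defs
begin


lemma par_zero: "parallel 0 w"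
  unfolding parallel_def by (rule exI[of _ 1], rule exI[of _ 0]) simp

lemma indep:
  assumes "\<not> parallel X Y" "of_real al * X + of_real be * Y = 0"
  shows "al = 0 \<and> be = 0"
  using assms unfolding parallel_def by blast

lemma vnd: "vertex_nondeg p qs \<Longrightarrow> i < length qs \<Longrightarrow> j < length qs \<Longrightarrow> i \<noteq> j
  \<Longrightarrow> \<not> parallel (qs ! i - p) (qs ! j - p)"
  unfolding vertex_nondeg_def by blast

lemma divdiv2: "(k1::complex) \<noteq> 0 \<Longrightarrow> k2 \<noteq> 0 \<Longrightarrow> k1 * n1 = k2 * n2 \<Longrightarrow> k1 * d1 = k2 * d2 \<Longrightarrow> n1 / d1 = n2 / d2"
proof -
  assume h: "k1 \<noteq> 0" "k2 \<noteq> 0" "k1 * n1 = k2 * n2" "k1 * d1 = k2 * d2"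
  then have "n1 = (k2/k1) * n2" "d1 = (k2/k1) * d2" by (simp_all add: field_simps)
  then show ?thesis using h by (cases "d2 = 0") auto
qed

lemma divdiv: "(k::complex) \<noteq> 0 \<Longrightarrow> n1 = k * n2 \<Longrightarrow> d1 = k * d2 \<Longrightarrow> n1 / d1 = n2 / d2"
  by (cases "d2 = 0") auto

theorem theorem5:
  shows
  "(\<forall>Psi Psi12 Phi1 Phi2 Phi13 Phi23 Psi1 Psi2 Phi Phi3 Phi12 Phi123
       (a::real) b c d e a3 b2 c1 d2 e1.
      fig1_nondeg Psi Psi12 Phi1 Phi2 Phi13 Phi23 \<and>
      fig2_nondeg Psi1 Psi2 Phi Phi3 Phi12 Phi123 \<and>
      recip_eqs Psi Psi12 Phi1 Phi2 Phi13 Phi23 Psi1 Psi2 Phi Phi3 Phi12 Phi123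
                a b c d e a3 b2 c1 d2 e1
      \<longrightarrow> a3 = a / (b * c * (a * d + e * d - e * a) + a * (b - c)) \<and>
          b2 = (a3 * (c - b) + 1) / c \<and>
          c1 = (a3 * (c - b) + 1) / b \<and>
          d2 = d / (a * d + e * d - e * a) \<and>
          e1 = e / (a * d + e * d - e * a))
   \<and>
   (\<forall>Phi Phi1 Phi2 Phi3 Psi (a::real) b c d e a3 b2 c1 d2 e1.
      a \<noteq> 0 \<and> b \<noteq> 0 \<and> c \<noteq> 0 \<and> d \<noteq> 0 \<and> e \<noteq> 0 \<and>
      a * d + e * d - e * a \<noteq> 0 \<and>
      b * c * (a * d + e * d - e * a) + a * (b - c) \<noteq> 0 \<and>
      a3 = a / (b * c * (a * d + e * d - e * a) + a * (b - c)) \<and>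
      b2 = (a3 * (c - b) + 1) / c \<and>
      c1 = (a3 * (c - b) + 1) / b \<and>
      d2 = d / (a * d + e * d - e * a) \<and>
      e1 = e / (a * d + e * d - e * a)
      \<longrightarrow> (\<exists>Psi12 Phi13 Phi23 Psi1 Psi2 Phi12 Phi123.
             recip_eqs Psi Psi12 Phi1 Phi2 Phi13 Phi23 Psi1 Psi2 Phi Phi3 Phi12 Phi123
                       a b c d e a3 b2 c1 d2 e1 \<and>
             Q Phi1 Phi2 Psi Psi12 = Q Psi2 Psi1 Phi12 Phi \<and>
             Q Psi1 Psi2 Phi3 Phi123 = Q Phi23 Phi13 Psi12 Psi))"
proof (rule conjI)
  show "\<forall>Psi Psi12 Phi1 Phi2 Phi13 Phi23 Psi1 Psi2 Phi Phi3 Phi12 Phi123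
       (a::real) b c d e a3 b2 c1 d2 e1.
      fig1_nondeg Psi Psi12 Phi1 Phi2 Phi13 Phi23 \<and>
      fig2_nondeg Psi1 Psi2 Phi Phi3 Phi12 Phi123 \<and>
      recip_eqs Psi Psi12 Phi1 Phi2 Phi13 Phi23 Psi1 Psi2 Phi Phi3 Phi12 Phi123
                a b c d e a3 b2 c1 d2 e1
      \<longrightarrow> a3 = a / (b * c * (a * d + e * d - e * a) + a * (b - c)) \<and>
          b2 = (a3 * (c - b) + 1) / c \<and>
          c1 = (a3 * (c - b) + 1) / b \<and>
          d2 = d / (a * d + e * d - e * a) \<and>
          e1 = e / (a * d + e * d - e * a)"
  proof (intro allI impI, elim conjE)
    fix Psi Psi12 Phi1 Phi2 Phi13 Phi23 Psi1 Psi2 Phi Phi3 Phi12 Phi123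
       and a::real and b c d e a3 b2 c1 d2 e1
    assume f1: "fig1_nondeg Psi Psi12 Phi1 Phi2 Phi13 Phi23"
      and f2: "fig2_nondeg Psi1 Psi2 Phi Phi3 Phi12 Phi123"
      and r: "recip_eqs Psi Psi12 Phi1 Phi2 Phi13 Phi23 Psi1 Psi2 Phi Phi3 Phi12 Phi123
                a b c d e a3 b2 c1 d2 e1"
    have vPsi: "vertex_nondeg Psi [Phi1, Phi2, Phi13, Phi23]" using f1 unfolding fig1_nondeg_def by blast
    have vPhi: "vertex_nondeg Phi [Phi12, Psi1, Psi2]" using f2 unfolding fig2_nondeg_def by blast
    have e1': "Phi12 - Phi = of_real a * (Phi1 - Phi2)"
      and e2': "Phi13 - Psi = of_real b * (Psi1 - Phi3)"
      and e3': "Phi23 - Psi = of_real c * (Psi2 - Phi3)"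
      and e4': "Psi1 - Phi = of_real d * (Phi1 - Psi)"
      and e5': "Psi2 - Phi = of_real e * (Phi2 - Psi)"
      and e6': "Phi123 - Phi3 = of_real a3 * (Phi13 - Phi23)"
      and e7': "Phi123 - Psi2 = of_real b2 * (Psi12 - Phi23)"
      and e8': "Phi123 - Psi1 = of_real c1 * (Psi12 - Phi13)"
      and e9': "Psi12 - Phi2 = of_real d2 * (Phi12 - Psi2)"
      and e10': "Psi12 - Phi1 = of_real e1 * (Phi12 - Psi1)"
      using r unfolding recip_eqs_def by blast+
    have npUV: "\<not> parallel (Phi1 - Psi) (Phi2 - Psi)" using vnd[OF vPsi, of 0 1] by simp
    have npXY: "\<not> parallel (Phi13 - Psi) (Phi23 - Psi)" using vnd[OF vPsi, of 2 3] by simp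
    have a0: "a \<noteq> 0"
    proof
      assume "a = 0"
      then have "Phi12 - Phi = 0" using e1' by simp
      then show False using vnd[OF vPhi, of 0 1] par_zero by simp
    qed
    have d0: "d \<noteq> 0"
    proof
      assume "d = 0"
      then have "Psi1 - Phi = 0" using e4' by simp
      then show False using vnd[OF vPhi, of 1 0] par_zero by simp
    qed
    have e0: "e \<noteq> 0"
    proof
      assume "e = 0"
      then have "Psi2 - Phi = 0" using e5' by simp
      then show False using vnd[OF vPhi, of 2 0] par_zero by simp
    qed
    have b0: "b \<noteq> 0"
    proof
      assume "b = 0"
      then have "Phi13 - Psi = 0" using e2' by simp
      then show False using vnd[OF vPsi, of 2 0] par_zero by simp
    qed
    have c0: "c \<noteq> 0"
    proof
      assume "c = 0"
      then have "Phi23 - Psi = 0" using e3' by simp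
      then show False using vnd[OF vPsi, of 3 0] par_zero by simp
    qed
    define D where "D = a * d + e * d - e * a"
    have L1: "of_real (-1 + d2 * a - e1 * (a - d)) * (Phi1 - Psi)
        + of_real (1 - d2 * (a + e) + e1 * a) * (Phi2 - Psi) = 0"
    proof -
      have "Phi12 = Phi + of_real a * (Phi1 - Phi2)" using e1' by (simp add: algebra_simps)
      moreover have "Psi1 = Phi + of_real d * (Phi1 - Psi)" using e4' by (simp add: algebra_simps)
      moreover have "Psi2 = Phi + of_real e * (Phi2 - Psi)" using e5' by (simp add: algebra_simps)
      moreover have "Phi2 + of_real d2 * (Phi12 - Psi2) = Phi1 + of_real e1 * (Phi12 - Psi1)"
        using e9' e10' by algebra
      ultimately show ?thesis by simp algebra
    qed
    from indep[OF npUV L1] have c1a: "d2 * a - e1 * (a - d) = 1" and c2a: "d2 * (a + e) - e1 * a = 1"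
      by auto
    have Dd2: "D * d2 = d" unfolding D_def using c1a c2a by algebra
    have De1: "D * e1 = e" unfolding D_def using c1a c2a by algebra
    have D0: "D \<noteq> 0" using Dd2 d0 by auto
    have d2v: "d2 = d / D" using Dd2 D0 by (simp add: field_simps)
    have e1v: "e1 = e / D" using De1 D0 by (simp add: field_simps)
    define X where "X = Phi13 - Psi"
    define Y where "Y = Phi23 - Psi"
    define Z where "Z = Psi12 - Psi"
    have ZZ: "of_real (b * c * D) * Z = of_real a * (of_real c * X - of_real b * Y)"
    proof -
      have "Phi12 = Phi + of_real a * (Phi1 - Phi2)" using e1' by (simp add: algebra_simps)
      moreover have "Psi1 = Phi + of_real d * (Phi1 - Psi)" using e4' by (simp add: algebra_simps)
      moreover have "Psi2 = Phi + of_real e * (Phi2 - Psi)" using e5' by (simp add: algebra_simps)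
      moreover have "Psi12 = Phi1 + of_real e1 * (Phi12 - Psi1)" using e10' by (simp add: algebra_simps)
      moreover have "Phi13 = Psi + of_real b * (Psi1 - Phi3)" using e2' by (simp add: algebra_simps)
      moreover have "Phi23 = Psi + of_real c * (Psi2 - Phi3)" using e3' by (simp add: algebra_simps)
      moreover have "of_real D * of_real e1 = (of_real e :: complex)" using De1
        by (metis of_real_mult)
      ultimately show ?thesis unfolding X_def Y_def Z_def D_def
        by simp algebra
    qed
    have T1: "of_real c * of_real a3 * (X - Y) - of_real c * of_real b2 * (Z - Y) - Y = 0"
    proof -
      show ?thesis using e3' e6' e7' unfolding X_def Y_def Z_def by algebra
    qed
    have T2: "of_real b * of_real a3 * (X - Y) - of_real b * of_real c1 * (Z - X) - X = 0"
    proof -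
      show ?thesis using e2' e6' e8' unfolding X_def Y_def Z_def by algebra
    qed
    have L2: "of_real (c*b*D*a3 - a*c*b2) * X + of_real (-c*b*D*a3 + a*b*b2 + c*b*D*b2 - b*D) * Y = 0"
    proof -
      have "of_real (c*b*D*a3 - a*c*b2) * X + of_real (-c*b*D*a3 + a*b*b2 + c*b*D*b2 - b*D) * Y
        = of_real (b*D) * (of_real c * of_real a3 * (X - Y) - of_real c * of_real b2 * (Z - Y) - Y)
          + of_real b2 * (of_real (b * c * D) * Z - of_real a * (of_real c * X - of_real b * Y))"
        by (simp add: algebra_simps)
      then show ?thesis using T1 ZZ by simp
    qed
    from indep[OF npXY[folded X_def Y_def] L2]
    have u1: "c*b*D*a3 - a*c*b2 = 0" and u2: "-c*b*D*a3 + a*b*b2 + c*b*D*b2 - b*D = 0" by auto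
    have L3: "of_real (b*c*D*a3 - a*c*c1 + b*c*D*c1 - c*D) * X + of_real (-b*c*D*a3 + a*b*c1) * Y = 0"
    proof -
      have "of_real (b*c*D*a3 - a*c*c1 + b*c*D*c1 - c*D) * X + of_real (-b*c*D*a3 + a*b*c1) * Y
        = of_real (c*D) * (of_real b * of_real a3 * (X - Y) - of_real b * of_real c1 * (Z - X) - X)
          + of_real c1 * (of_real (b * c * D) * Z - of_real a * (of_real c * X - of_real b * Y))"
        by (simp add: algebra_simps)
      then show ?thesis using T2 ZZ by simp
    qed
    from indep[OF npXY[folded X_def Y_def] L3]
    have w2: "-b*c*D*a3 + a*b*c1 = 0" by auto
    define N where "N = b * c * D + a * (b - c)"
    have b2a: "b * D * a3 = a * b2" using u1 c0 by (simp add: algebra_simps)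
    have Na3: "a3 * N = a"
    proof -
      have "a * (-c*b*D*a3 + a*b*b2 + c*b*D*b2 - b*D) = 0" using u2 by simp
      then have "b * (a3 * N - a) * D = 0" unfolding N_def using b2a by algebra
      then show ?thesis using b0 D0 by simp
    qed
    have N0: "N \<noteq> 0" using Na3 a0 by auto
    have a3v: "a3 = a / N" using Na3 N0 by (simp add: field_simps)
    have b2v: "b2 = b * D / N" using b2a a0 a3v N0 by (simp add: field_simps)
    have c1v: "c1 = c * D / N" using w2 a0 b0 a3v N0 by (simp add: field_simps)
    show "a3 = a / (b * c * (a * d + e * d - e * a) + a * (b - c)) \<and>
          b2 = (a3 * (c - b) + 1) / c \<and>
          c1 = (a3 * (c - b) + 1) / b \<and>
          d2 = d / (a * d + e * d - e * a) \<and>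
          e1 = e / (a * d + e * d - e * a)"
    proof (intro conjI)
      show "a3 = a / (b * c * (a * d + e * d - e * a) + a * (b - c))" using a3v unfolding N_def D_def .
      have key: "a3 * (c - b) + 1 = b * c * D / N"
      proof -
        have "a3 * (c - b) + 1 = (a * (c - b) + N) / N" unfolding a3v using N0 by (simp add: field_simps)
        also have "a * (c - b) + N = b * c * D" unfolding N_def by (simp add: algebra_simps)
        finally show ?thesis .
      qed
      show "b2 = (a3 * (c - b) + 1) / c" unfolding key b2v using c0 by simp
      show "c1 = (a3 * (c - b) + 1) / b" unfolding key c1v using b0 by simp
      show "d2 = d / (a * d + e * d - e * a)" using d2v unfolding D_def .
      show "e1 = e / (a * d + e * d - e * a)" using e1v unfolding D_def .
    qed
  qed
next
  show "(\<forall>Phi Phi1 Phi2 Phi3 Psi (a::real) b c d e a3 b2 c1 d2 e1.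
      a \<noteq> 0 \<and> b \<noteq> 0 \<and> c \<noteq> 0 \<and> d \<noteq> 0 \<and> e \<noteq> 0 \<and>
      a * d + e * d - e * a \<noteq> 0 \<and>
      b * c * (a * d + e * d - e * a) + a * (b - c) \<noteq> 0 \<and>
      a3 = a / (b * c * (a * d + e * d - e * a) + a * (b - c)) \<and>
      b2 = (a3 * (c - b) + 1) / c \<and>
      c1 = (a3 * (c - b) + 1) / b \<and>
      d2 = d / (a * d + e * d - e * a) \<and>
      e1 = e / (a * d + e * d - e * a)
      \<longrightarrow> (\<exists>Psi12 Phi13 Phi23 Psi1 Psi2 Phi12 Phi123.
             recip_eqs Psi Psi12 Phi1 Phi2 Phi13 Phi23 Psi1 Psi2 Phi Phi3 Phi12 Phi123
                       a b c d e a3 b2 c1 d2 e1 \<and>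
             Q Phi1 Phi2 Psi Psi12 = Q Psi2 Psi1 Phi12 Phi \<and>
             Q Psi1 Psi2 Phi3 Phi123 = Q Phi23 Phi13 Psi12 Psi))"
  proof (intro allI impI, elim conjE)
    fix Phi Phi1 Phi2 Phi3 Psi and a::real and b c d e a3 b2 c1 d2 e1
    assume a0: "a \<noteq> 0" and b0: "b \<noteq> 0" and c0: "c \<noteq> 0" and d0: "d \<noteq> 0" and e0: "e \<noteq> 0"
      and D0': "a * d + e * d - e * a \<noteq> 0"
      and N0': "b * c * (a * d + e * d - e * a) + a * (b - c) \<noteq> 0"
      and a3d: "a3 = a / (b * c * (a * d + e * d - e * a) + a * (b - c))"
      and b2d: "b2 = (a3 * (c - b) + 1) / c"
      and c1d: "c1 = (a3 * (c - b) + 1) / b"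
      and d2d: "d2 = d / (a * d + e * d - e * a)"
      and e1d: "e1 = e / (a * d + e * d - e * a)"
    define D where "D = a * d + e * d - e * a"
    define N where "N = b * c * D + a * (b - c)"
    have D0: "D \<noteq> 0" using D0' unfolding D_def .
    have N0: "N \<noteq> 0" using N0' unfolding N_def D_def .
    have Na3: "N * a3 = a" using a3d N0 unfolding N_def D_def by simp
    have key: "a3 * (c - b) + 1 = b * c * D / N"
    proof -
      have "a3 * (c - b) + 1 = (a * (c - b) + N) / N" unfolding a3d N_def[symmetric] D_def[symmetric]
        using N0 by (simp add: field_simps)
      also have "a * (c - b) + N = b * c * D" unfolding N_def by (simp add: algebra_simps)
      finally show ?thesis .
    qed
    have Nb2: "N * b2 = b * D" unfolding b2d key using c0 N0 by simp
    have Nc1: "N * c1 = c * D" unfolding c1d key using b0 N0 by simp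
    have Dd2: "D * d2 = d" unfolding d2d D_def using D0' by simp
    have De1: "D * e1 = e" unfolding e1d D_def using D0' by simp
    define A where "A = (of_real a :: complex)"
    define B where "B = (of_real b :: complex)"
    define C where "C = (of_real c :: complex)"
    define Dl where "Dl = (of_real d :: complex)"
    define E where "E = (of_real e :: complex)"
    define A3 where "A3 = (of_real a3 :: complex)"
    define B2 where "B2 = (of_real b2 :: complex)"
    define C1 where "C1 = (of_real c1 :: complex)"
    define D2 where "D2 = (of_real d2 :: complex)"
    define E1 where "E1 = (of_real e1 :: complex)"
    define DD where "DD = (of_real D :: complex)"
    define NN where "NN = (of_real N :: complex)"
    have DDv: "DD = A * Dl + E * Dl - E * A" unfolding DD_def D_def A_def Dl_def E_def by simp
    have NNv: "NN = B * C * DD + A * (B - C)" unfolding NN_def N_def DD_def A_def B_def C_def by simp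
    have DD0: "DD \<noteq> 0" unfolding DD_def using D0 by simp
    have NN0: "NN \<noteq> 0" unfolding NN_def using N0 by simp
    have cNa3: "NN * A3 = A" unfolding NN_def A3_def A_def using Na3 by (metis of_real_mult)
    have cNb2: "NN * B2 = B * DD" unfolding NN_def B2_def B_def DD_def using Nb2 by (metis of_real_mult)
    have cNc1: "NN * C1 = C * DD" unfolding NN_def C1_def C_def DD_def using Nc1 by (metis of_real_mult)
    have cDd2: "DD * D2 = Dl" unfolding DD_def D2_def Dl_def using Dd2 by (metis of_real_mult)
    have cDe1: "DD * E1 = E" unfolding DD_def E1_def E_def using De1 by (metis of_real_mult)
    have DD0': "A*Dl + E*Dl - E*A \<noteq> 0" using DD0 DDv by simp
    have NN0': "B*C*(A*Dl + E*Dl - E*A) + A*(B-C) \<noteq> 0" using NN0 NNv DDv by simp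
    have D2e: "D2 = Dl / (A*Dl + E*Dl - E*A)" using cDd2 DD0 DDv by (simp add: field_simps)
    have E1e: "E1 = E / (A*Dl + E*Dl - E*A)" using cDe1 DD0 DDv by (simp add: field_simps)
    have A3e: "A3 = A / (B*C*(A*Dl + E*Dl - E*A) + A*(B-C))" using cNa3 NN0 NNv DDv by (simp add: field_simps)
    have B2e: "B2 = B * (A*Dl + E*Dl - E*A) / (B*C*(A*Dl + E*Dl - E*A) + A*(B-C))" using cNb2 NN0 NNv DDv by (simp add: field_simps)
    have C1e: "C1 = C * (A*Dl + E*Dl - E*A) / (B*C*(A*Dl + E*Dl - E*A) + A*(B-C))" using cNc1 NN0 NNv DDv by (simp add: field_simps)
    have B0: "B \<noteq> 0" using b0 B_def by simp
    have C0: "C \<noteq> 0" using c0 C_def by simp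
    define Psi1 where "Psi1 = Phi + Dl * (Phi1 - Psi)"
    define Psi2 where "Psi2 = Phi + E * (Phi2 - Psi)"
    define Phi12 where "Phi12 = Phi + A * (Phi1 - Phi2)"
    define Phi13 where "Phi13 = Psi + B * (Psi1 - Phi3)"
    define Phi23 where "Phi23 = Psi + C * (Psi2 - Phi3)"
    define Psi12 where "Psi12 = Phi2 + D2 * (Phi12 - Psi2)"
    define Phi123 where "Phi123 = Phi3 + A3 * (Phi13 - Phi23)"
    define X where "X = Phi13 - Psi"
    define Y where "Y = Phi23 - Psi"
    define Z where "Z = Psi12 - Psi"
    have Xe: "X = B * (Psi1 - Phi3)" unfolding X_def Phi13_def by simp
    have Ye: "Y = C * (Psi2 - Phi3)" unfolding Y_def Phi23_def by simp
    have q10: "Psi12 - Phi1 = E1 * (Phi12 - Psi1)"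
    proof -
      have "DD*(Psi12 - Phi1 - E1*(Phi12-Psi1)) = DD*(Phi2-Phi1) + (DD*D2)*(Phi12-Psi2) - (DD*E1)*(Phi12-Psi1)"
        unfolding Psi12_def by (simp add: algebra_simps)
      also have "\<dots> = DD*(Phi2-Phi1) + Dl*(Phi12-Psi2) - E*(Phi12-Psi1)" by (simp only: cDd2 cDe1)
      also have "\<dots> = 0" unfolding DDv Phi12_def Psi1_def Psi2_def by (simp add: algebra_simps)
      finally show ?thesis using DD0 by simp
    qed
    have DZ: "DD * Z = DD*(Phi1-Psi) + E*(Phi12-Psi1)"
    proof -
      have "Z = (Phi1 - Psi) + E1*(Phi12-Psi1)" unfolding Z_def using q10 by (simp add: algebra_simps)
      then have "DD * Z = DD*((Phi1 - Psi) + E1*(Phi12-Psi1))" by simp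
      also have "\<dots> = DD*(Phi1-Psi) + (DD*E1)*(Phi12-Psi1)" by (simp add: algebra_simps)
      finally show ?thesis by (simp only: cDe1)
    qed
    have BCX: "C * X - B * Y = B * C * (Psi1 - Psi2)" unfolding Xe Ye by (simp add: algebra_simps)
    have ZZ: "B * C * DD * Z = A * (C * X - B * Y)"
    proof -
      have "B * C * DD * Z = B * C * (DD*(Phi1-Psi) + E*(Phi12-Psi1))" using DZ by simp
      also have "\<dots> = A * (B * C * (Psi1 - Psi2))"
        unfolding DDv Phi12_def Psi1_def Psi2_def by (simp add: algebra_simps)
      finally show ?thesis unfolding BCX .
    qed
    have P123: "Phi123 = Phi3 + A3 * (X - Y)" unfolding Phi123_def X_def Y_def by simp
    have q7: "Phi123 - Psi2 = B2 * (Psi12 - Phi23)"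
    proof -
      have ZY: "Psi12 - Phi23 = Z - Y" unfolding Z_def Y_def by simp
      have "C*NN*(Phi123 - Psi2 - B2*(Psi12 - Phi23))
          = C*(NN*A3)*(X-Y) - NN*(C*(Psi2-Phi3)) - (NN*B2)*(C*(Z-Y))"
        unfolding P123 ZY by (simp add: algebra_simps)
      also have "\<dots> = C*A*(X-Y) - NN*Y - B*DD*(C*(Z-Y))" unfolding cNa3 cNb2 Ye[symmetric] by (simp add: algebra_simps)
      also have "\<dots> = C*A*(X-Y) - NN*Y - B*C*DD*Z + B*C*DD*Y" by (simp add: algebra_simps)
      also have "\<dots> = C*A*(X-Y) - NN*Y - A * (C * X - B * Y) + B*C*DD*Y" unfolding ZZ ..
      also have "\<dots> = 0" unfolding NNv by (simp add: algebra_simps)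
      finally show ?thesis using C0 NN0 by simp
    qed
    have q8: "Phi123 - Psi1 = C1 * (Psi12 - Phi13)"
    proof -
      have ZX: "Psi12 - Phi13 = Z - X" unfolding Z_def X_def by simp
      have "B*NN*(Phi123 - Psi1 - C1*(Psi12 - Phi13))
          = B*(NN*A3)*(X-Y) - NN*(B*(Psi1-Phi3)) - (NN*C1)*(B*(Z-X))"
        unfolding P123 ZX by (simp add: algebra_simps)
      also have "\<dots> = B*A*(X-Y) - NN*X - C*DD*(B*(Z-X))" unfolding cNa3 cNc1 Xe[symmetric] by (simp add: algebra_simps)
      also have "\<dots> = B*A*(X-Y) - NN*X - B*C*DD*Z + B*C*DD*X" by (simp add: algebra_simps)
      also have "\<dots> = B*A*(X-Y) - NN*X - A * (C * X - B * Y) + B*C*DD*X" unfolding ZZ ..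
      also have "\<dots> = 0" unfolding NNv by (simp add: algebra_simps)
      finally show ?thesis using B0 NN0 by simp
    qed
    show "\<exists>Psi12 Phi13 Phi23 Psi1 Psi2 Phi12 Phi123.
             recip_eqs Psi Psi12 Phi1 Phi2 Phi13 Phi23 Psi1 Psi2 Phi Phi3 Phi12 Phi123
                       a b c d e a3 b2 c1 d2 e1 \<and>
             Q Phi1 Phi2 Psi Psi12 = Q Psi2 Psi1 Phi12 Phi \<and>
             Q Psi1 Psi2 Phi3 Phi123 = Q Phi23 Phi13 Psi12 Psi"
    proof (intro exI conjI)
      show "recip_eqs Psi Psi12 Phi1 Phi2 Phi13 Phi23 Psi1 Psi2 Phi Phi3 Phi12 Phi123
                       a b c d e a3 b2 c1 d2 e1"
        unfolding recip_eqs_def A_def[symmetric] B_def[symmetric] C_def[symmetric] Dl_def[symmetric]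
          E_def[symmetric] A3_def[symmetric] B2_def[symmetric] C1_def[symmetric] D2_def[symmetric]
          E1_def[symmetric]
        by (intro conjI q10 q7 q8)
          (simp_all add: Psi1_def Psi2_def Phi12_def Phi13_def Phi23_def Psi12_def Phi123_def)
      show "Q Phi1 Phi2 Psi Psi12 = Q Psi2 Psi1 Phi12 Phi"
        unfolding Q_def
      proof (rule divdiv2[OF DD0, of 1])
        show "(1::complex) \<noteq> 0" by simp
        have "DD * ((Phi1 - Phi2) * (Psi - Psi12)) = - (Phi1 - Phi2) * (DD * Z)"
          unfolding Z_def by (simp add: algebra_simps)
        also have "\<dots> = - (Phi1 - Phi2) * (DD*(Phi1-Psi) + E*(Phi12-Psi1))" unfolding DZ ..
        also have "\<dots> = 1 * ((Psi2 - Psi1) * (Phi12 - Phi))"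
          unfolding DDv Phi12_def Psi1_def Psi2_def by (simp add: algebra_simps)
        finally show "DD * ((Phi1 - Phi2) * (Psi - Psi12)) = 1 * ((Psi2 - Psi1) * (Phi12 - Phi))" .
        have "DD * ((Phi2 - Psi) * (Psi12 - Phi1)) = (Phi2 - Psi) * (DD * E1) * (Phi12 - Psi1)"
          unfolding q10 by (simp add: algebra_simps)
        also have "\<dots> = (Phi2 - Psi) * E * (Phi12 - Psi1)" unfolding cDe1 ..
        also have "\<dots> = 1 * ((Psi1 - Phi12) * (Phi - Psi2))"
          unfolding Psi2_def by (simp add: algebra_simps)
        finally show "DD * ((Phi2 - Psi) * (Psi12 - Phi1)) = 1 * ((Psi1 - Phi12) * (Phi - Psi2))" .
      qed
      show "Q Psi1 Psi2 Phi3 Phi123 = Q Phi23 Phi13 Psi12 Psi"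
        unfolding Q_def
      proof (rule divdiv2[OF NN0 DD0])
        have "B * C * (NN * ((Psi1 - Psi2) * (Phi3 - Phi123)))
            = - (NN * A3) * (X - Y) * (B * C * (Psi1 - Psi2))"
          unfolding P123 by (simp add: algebra_simps)
        also have "\<dots> = - A * (X - Y) * (C * X - B * Y)" unfolding cNa3 BCX ..
        also have "\<dots> = (Y - X) * (B * C * DD * Z)" unfolding ZZ by (simp add: algebra_simps)
        also have "\<dots> = B * C * (DD * ((Phi23 - Phi13) * (Psi12 - Psi)))"
          unfolding X_def Y_def Z_def by (simp add: algebra_simps)
        finally show "NN * ((Psi1 - Psi2) * (Phi3 - Phi123)) = DD * ((Phi23 - Phi13) * (Psi12 - Psi))"
          using B0 C0 by simp
        have "C * (NN * ((Psi2 - Phi3) * (Phi123 - Psi1)))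
            = (C * (Psi2 - Phi3)) * ((NN * C1) * (Psi12 - Phi13))"
          unfolding q8 by (simp add: algebra_simps)
        also have "\<dots> = Y * (C * DD * (Z - X))" unfolding Ye[symmetric] cNc1 Z_def X_def
          by (simp add: algebra_simps)
        also have "\<dots> = C * (DD * ((Phi13 - Psi12) * (Psi - Phi23)))"
          unfolding X_def Y_def Z_def by (simp add: algebra_simps)
        finally show "NN * ((Psi2 - Phi3) * (Phi123 - Psi1)) = DD * ((Phi13 - Psi12) * (Psi - Phi23))"
          using C0 by simp
      qed
    qed
  qed
qed

end
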